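(* Fix integers $n,d,k,L\ge1$ and a temperature $s>0$. Consider the $L$-layer linear Transformer acting on $Z_l\in\mathbb{R}^{(d+2k)\times n}$ by $$Z_{l+1}=Z_l+W^V_l Z_l Z_l^\top (W^Q_l)^\top W^K_l Z_l+W^R_l Z_l,$$ with weights $W^V_l,W^Q_l,W^K_l,W^R_l\in\mathbb{R}^{(d+2k)\times(d+2k)}$ and input $Z_0^\top=\begin{bmatrix}B, & \Psi, & 0_{n\times k}\end{bmatrix}$, where $B\in\mathbb{R}^{n\times d}$ is the incidence matrix of a graph and $\Psi=[\psi_1,\dots,\psi_k]\in\mathbb{R}^{n\times k}$ with $\langle\psi_i,\vec 1\rangle=0$ for all $i$. Then there exists a configuration of the weights such that for every connected input graph with $n$ vertices and $d$ edges whose Laplacian $\mathcal{L}=BB^\top$ has largest eigenvalue $\lambda_{\max}$ satisfying $8s\lambda_{\max}\le L$, and for all $i=1,\dots,k$, $$\left\|[Z_L]_{d+k+i}^\top-e^{-s\mathcal{L}}\psi_i\right\|_2\le 2^{-L+8s\lambda_{\max}+1}\|\psi_i\|_2 .$$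
   Context: A graph has $n$ vertices and $d$ edges with positive resistances $r_j$; graphs are assumed connected. With an arbitrary orientation of each edge, the incidence matrix $B\in\mathbb{R}^{n\times d}$ has $B_{ij}=-1/\sqrt{r_j}$ if $e_j$ leaves vertex $i$, $+1/\sqrt{r_j}$ if $e_j$ enters vertex $i$, and $0$ otherwise; the Laplacian is $\mathcal{L}=BB^\top$ and $e^{-s\mathcal{L}}$ is the matrix exponential. $[Z]_j$ denotes the $j$-th row of $Z$; $\vec 1$ is the all-ones vector. *)

theory Defs
  imports "Jordan_Normal_Form.Char_Poly"
begin

definition mat_exp :: "real mat \<Rightarrow> real mat" where
  "mat_exp A = mat (dim_row A) (dim_col A)
      (\<lambda>(i,j). (\<Sum>m. (A ^\<^sub>m m) $$ (i,j) / fact m))"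

definition vnorm2 :: "real vec \<Rightarrow> real" where
  "vnorm2 v = sqrt (\<Sum>i<dim_vec v. (v $ i)^2)"

(* A graph on vertices {0..<n} with d edges: edge j (j<d) is oriented from
   fst (ed j) to snd (ed j) and has resistance r j > 0. No self-loops. *)
definition wf_graph :: "nat \<Rightarrow> nat \<Rightarrow> (nat \<Rightarrow> nat \<times> nat) \<Rightarrow> (nat \<Rightarrow> real) \<Rightarrow> bool" where
  "wf_graph n d ed r \<longleftrightarrow> (\<forall>j<d. fst (ed j) < n \<and> snd (ed j) < n \<and> fst (ed j) \<noteq> snd (ed j) \<and> r j > 0)"

definition adj :: "nat \<Rightarrow> (nat \<Rightarrow> nat \<times> nat) \<Rightarrow> nat \<Rightarrow> nat \<Rightarrow> bool" where
  "adj d ed u v \<longleftrightarrow> (\<exists>j<d. ed j = (u,v) \<or> ed j = (v,u))"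

definition connected_graph :: "nat \<Rightarrow> nat \<Rightarrow> (nat \<Rightarrow> nat \<times> nat) \<Rightarrow> bool" where
  "connected_graph n d ed \<longleftrightarrow> (\<forall>u<n. \<forall>v<n. (adj d ed)\<^sup>*\<^sup>* u v)"

definition incidence :: "nat \<Rightarrow> nat \<Rightarrow> (nat \<Rightarrow> nat \<times> nat) \<Rightarrow> (nat \<Rightarrow> real) \<Rightarrow> real mat" where
  "incidence n d ed r = mat n d (\<lambda>(i,j).
      if fst (ed j) = i then - 1 / sqrt (r j)
      else if snd (ed j) = i then 1 / sqrt (r j) else 0)"

definition laplacian :: "real mat \<Rightarrow> real mat" where
  "laplacian B = B * transpose_mat B"

definition lambda_max :: "real mat \<Rightarrow> real" where
  "lambda_max A = Max {x. eigenvalue A x}"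

definition tf_layer :: "real mat \<Rightarrow> real mat \<Rightarrow> real mat \<Rightarrow> real mat \<Rightarrow> real mat \<Rightarrow> real mat" where
  "tf_layer WV WQ WK WR Z =
     Z + WV * Z * transpose_mat Z * transpose_mat WQ * WK * Z + WR * Z"

fun tf_run :: "(nat \<Rightarrow> real mat) \<Rightarrow> (nat \<Rightarrow> real mat) \<Rightarrow> (nat \<Rightarrow> real mat) \<Rightarrow> (nat \<Rightarrow> real mat)
               \<Rightarrow> nat \<Rightarrow> real mat \<Rightarrow> real mat" where
  "tf_run WV WQ WK WR 0 Z = Z"
| "tf_run WV WQ WK WR (Suc l) Z = tf_layer (WV l) (WQ l) (WK l) (WR l) (tf_run WV WQ WK WR l Z)"

definition input_Z0 :: "nat \<Rightarrow> nat \<Rightarrow> nat \<Rightarrow> real mat \<Rightarrow> real mat \<Rightarrow> real mat" where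
  "input_Z0 n d k B Psi = mat (d + 2*k) n (\<lambda>(i,j).
      if i < d then B $$ (j,i) else if i < d + k then Psi $$ (j, i - d) else 0)"

end

theory Submission
  imports Defs "Jordan_Normal_Form.Spectral_Radius" "HOL-Analysis.L2_Norm"
begin


definition qf :: "nat \<Rightarrow> (nat \<Rightarrow> nat \<Rightarrow> real) \<Rightarrow> (nat \<Rightarrow> real) \<Rightarrow> (nat \<Rightarrow> real) \<Rightarrow> real" where
  "qf n A x y = (\<Sum>u<n. x u * (\<Sum>v<n. A u v * y v))"

definition nsq :: "nat \<Rightarrow> (nat \<Rightarrow> real) \<Rightarrow> real" where
  "nsq n x = (\<Sum>u<n. (x u)^2)"

definition symm :: "nat \<Rightarrow> (nat \<Rightarrow> nat \<Rightarrow> real) \<Rightarrow> bool" where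
  "symm n A \<longleftrightarrow> (\<forall>u<n. \<forall>v<n. A u v = A v u)"

lemma qf_swap:
  assumes "symm n A" shows "qf n A x y = qf n A y x"
proof -
  have "qf n A x y = (\<Sum>u<n. \<Sum>v<n. x u * A u v * y v)"
    unfolding qf_def by (simp add: sum_distrib_left mult.assoc)
  also have "\<dots> = (\<Sum>v<n. \<Sum>u<n. x u * A u v * y v)" by (rule sum.swap)
  also have "\<dots> = (\<Sum>v<n. \<Sum>u<n. y v * A v u * x u)"
    using assms unfolding symm_def by (intro sum.cong refl) (auto simp: mult.commute mult.left_commute)
  also have "\<dots> = qf n A y x"
    unfolding qf_def by (simp add: sum_distrib_left mult.assoc)
  finally show ?thesis .
qed

lemma qf_add_left: "qf n A (\<lambda>u. x u + y u) z = qf n A x z + qf n A y z"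
  unfolding qf_def by (simp add: algebra_simps sum.distrib)
lemma qf_add_right: "qf n A z (\<lambda>u. x u + y u) = qf n A z x + qf n A z y"
  unfolding qf_def by (simp add: algebra_simps sum.distrib sum_distrib_left)
lemma qf_smult_left: "qf n A (\<lambda>u. t * x u) z = t * qf n A x z"
  unfolding qf_def by (simp add: algebra_simps sum_distrib_left)
lemma qf_smult_right: "qf n A z (\<lambda>u. t * x u) = t * qf n A z x"
  unfolding qf_def by (simp add: algebra_simps sum_distrib_left)

lemma qf_expand:
  assumes "symm n A"
  shows "qf n A (\<lambda>u. x u + t * y u) (\<lambda>u. x u + t * y u)
     = qf n A x x + 2 * t * qf n A x y + t^2 * qf n A y y"
  using qf_swap[OF assms, of y x]
  by (simp add: qf_add_left qf_add_right qf_smult_left qf_smult_right power2_eq_square algebra_simps)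

lemma nsq_expand:
  "nsq n (\<lambda>u. x u + t * y u) = nsq n x + 2 * t * (\<Sum>u<n. x u * y u) + t^2 * nsq n y"
  unfolding nsq_def by (simp add: power2_eq_square algebra_simps sum.distrib sum_distrib_left)

lemma lin_nonneg_zero:
  fixes a b :: real
  assumes "\<And>t. a * t + b \<ge> 0" shows "a = 0"
proof (rule ccontr)
  assume "a \<noteq> 0"
  have "a * (- (\<bar>b\<bar> + 1) / a) + b \<ge> 0" by (rule assms)
  moreover have "a * (- (\<bar>b\<bar> + 1) / a) = - (\<bar>b\<bar> + 1)" using \<open>a \<noteq> 0\<close> by simp
  ultimately show False by linarith
qed

lemma quad_nonneg_zero:
  fixes a b :: real
  assumes "\<And>t. a * t + b * t^2 \<ge> 0" shows "a = 0"
proof (rule ccontr)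
  assume a: "a \<noteq> 0"
  define c where "c = \<bar>b\<bar>"
  have c0: "c \<ge> 0" unfolding c_def by simp
  define t where "t = - a / (2 * (c + 1))"
  have pos: "c + 1 > 0" using c0 by simp
  have "a * t + b * t^2 \<le> a * t + c * t^2"
    unfolding c_def by (intro add_left_mono mult_right_mono) auto
  also have "\<dots> = - (a^2) * (c + 2) / (4 * (c + 1)^2)"
    unfolding t_def using pos
    by (simp add: power2_eq_square divide_simps) (simp add: algebra_simps)
  also have "\<dots> < 0"
    using a pos c0 by (intro divide_neg_pos mult_neg_pos) auto
  finally show False using assms[of t] by linarith
qed

lemma qf_cs:
  assumes S: "symm n A" and P: "\<And>z. qf n A z z \<ge> 0"
  shows "(qf n A x y)^2 \<le> qf n A x x * qf n A y y"
proof (cases "qf n A y y = 0")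
  case True
  have "\<And>t. (2 * qf n A x y) * t + qf n A x x \<ge> 0"
  proof -
    fix t
    have "0 \<le> qf n A (\<lambda>u. x u + t * y u) (\<lambda>u. x u + t * y u)" by (rule P)
    then show "(2 * qf n A x y) * t + qf n A x x \<ge> 0"
      using True by (simp add: qf_expand[OF S] algebra_simps)
  qed
  from lin_nonneg_zero[OF this] have "qf n A x y = 0" by simp
  then show ?thesis using True by simp
next
  case False
  then have pos: "qf n A y y > 0" using P[of y] by simp
  define t where "t = - qf n A x y / qf n A y y"
  have "0 \<le> qf n A (\<lambda>u. x u + t * y u) (\<lambda>u. x u + t * y u)" by (rule P)
  also have "\<dots> = qf n A x x - (qf n A x y)^2 / qf n A y y"
    unfolding qf_expand[OF S] t_def using pos by (simp add: power2_eq_square field_simps)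
  finally have "(qf n A x y)^2 / qf n A y y \<le> qf n A x x" by simp
  then show ?thesis using pos by (simp add: field_simps)
qed


lemma subseq_conv:
  fixes f :: "nat \<Rightarrow> nat \<Rightarrow> real"
  assumes bnd: "\<And>k u. u < N \<Longrightarrow> \<bar>f k u\<bar> \<le> 1"
  shows "m \<le> N \<Longrightarrow> \<exists>r. strict_mono r \<and> (\<forall>u<m. convergent (\<lambda>k. f (r k) u))"
proof (induction m)
  case 0 show ?case by (rule exI[of _ id]) (auto simp: strict_mono_def)
next
  case (Suc m)
  then obtain r where r: "strict_mono r" and c: "\<forall>u<m. convergent (\<lambda>k. f (r k) u)" by auto
  obtain r' where r': "strict_mono r'" and mono: "monoseq (\<lambda>k. f (r (r' k)) m)"
    using seq_monosub[of "\<lambda>k. f (r k) m"] by blast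
  have "Bseq (\<lambda>k. f (r (r' k)) m)" using bnd Suc.prems by (intro BseqI'[of _ 1]) auto
  then have cm: "convergent (\<lambda>k. f (r (r' k)) m)" using Bseq_monoseq_convergent mono by blast
  have "\<forall>u<Suc m. convergent (\<lambda>k. f ((r \<circ> r') k) u)"
  proof (intro allI impI)
    fix u assume "u < Suc m"
    show "convergent (\<lambda>k. f ((r \<circ> r') k) u)"
    proof (cases "u = m")
      case True then show ?thesis using cm by simp
    next
      case False
      then have "u < m" using \<open>u < Suc m\<close> by simp
      with c obtain l where "(\<lambda>k. f (r k) u) \<longlonglongrightarrow> l" unfolding convergent_def by blast
      from LIMSEQ_subseq_LIMSEQ[OF this r'] show ?thesis unfolding convergent_def o_def by auto
    qed
  qed
  moreover have "strict_mono (r \<circ> r')" using r r' by (rule strict_mono_o)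
  ultimately show ?case by blast
qed

lemma nsq_bound: "nsq n x = 1 \<Longrightarrow> u < n \<Longrightarrow> \<bar>x u\<bar> \<le> 1"
proof -
  assume "nsq n x = 1" "u < n"
  then have "(x u)^2 \<le> 1" unfolding nsq_def
    by (metis finite_lessThan lessThan_iff member_le_sum zero_le_power2)
  then show ?thesis by (simp add: abs_square_le_1)
qed

lemma qf_bound:
  assumes "nsq n x = 1" shows "qf n A x x \<le> (\<Sum>u<n. \<Sum>v<n. \<bar>A u v\<bar>)"
proof -
  have eq: "qf n A x x = (\<Sum>u<n. \<Sum>v<n. x u * A u v * x v)"
    unfolding qf_def by (simp add: sum_distrib_left mult.assoc)
  have trm: "x u * A u v * x v \<le> \<bar>A u v\<bar>" if "u < n" "v < n" for u v
  proof -
    have "\<bar>x u\<bar> \<le> 1" "\<bar>x v\<bar> \<le> 1" using nsq_bound[OF assms] that by auto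
    then have "\<bar>x u\<bar> * \<bar>A u v\<bar> * \<bar>x v\<bar> \<le> 1 * \<bar>A u v\<bar> * 1"
      by (intro mult_mono) auto
    then have "\<bar>x u * A u v * x v\<bar> \<le> \<bar>A u v\<bar>" by (simp add: abs_mult)
    then show ?thesis by linarith
  qed
  have "(\<Sum>u<n. \<Sum>v<n. x u * A u v * x v) \<le> (\<Sum>u<n. \<Sum>v<n. \<bar>A u v\<bar>)"
    by (intro sum_mono) (simp add: trm)
  then show ?thesis using eq by simp
qed

lemma max_exists:
  assumes n: "n \<ge> 1"
  shows "\<exists>w. nsq n w = 1 \<and> (\<forall>x. nsq n x = 1 \<longrightarrow> qf n A x x \<le> qf n A w w)"
proof -
  define S where "S = {qf n A x x | x. nsq n x = 1}"
  define \<sigma> where "\<sigma> = Sup S"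
  have bdd: "bdd_above S" unfolding S_def bdd_above_def using qf_bound by blast
  have "nsq n (\<lambda>u. if u = 0 then 1 else 0) = 1" unfolding nsq_def using n
    by (simp add: sum.delta' if_distrib[of "\<lambda>x. x^2"] cong: if_cong)
  then have ne: "S \<noteq> {}" unfolding S_def by blast
  have "\<forall>k. \<exists>x. nsq n x = 1 \<and> \<sigma> - inverse (real (Suc k)) < qf n A x x"
  proof
    fix k
    have "\<sigma> - inverse (real (Suc k)) < Sup S" unfolding \<sigma>_def by simp
    from less_cSupD[OF ne this] show "\<exists>x. nsq n x = 1 \<and> \<sigma> - inverse (real (Suc k)) < qf n A x x"
      unfolding S_def by blast
  qed
  then obtain xs where xs1: "\<And>k. nsq n (xs k) = 1"
    and xs2: "\<And>k. \<sigma> - inverse (real (Suc k)) < qf n A (xs k) (xs k)" by metis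
  have up: "\<And>x. nsq n x = 1 \<Longrightarrow> qf n A x x \<le> \<sigma>"
    unfolding \<sigma>_def S_def using bdd S_def by (intro cSup_upper) auto
  obtain r where r: "strict_mono r" and cv: "\<forall>u<n. convergent (\<lambda>k. xs (r k) u)"
    using subseq_conv[of n xs n] nsq_bound[OF xs1] by blast
  define w where "w u = lim (\<lambda>k. xs (r k) u)" for u
  have lw: "\<And>u. u < n \<Longrightarrow> (\<lambda>k. xs (r k) u) \<longlonglongrightarrow> w u"
    using cv unfolding w_def by (simp add: convergent_LIMSEQ_iff)
  have t1: "(\<lambda>k. nsq n (xs (r k))) \<longlonglongrightarrow> nsq n w"
    unfolding nsq_def by (intro tendsto_sum tendsto_power lw) auto
  have t2: "(\<lambda>k. nsq n (xs (r k))) \<longlonglongrightarrow> 1" using xs1 by simp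
  have w1: "nsq n w = 1" using LIMSEQ_unique[OF t1 t2] .
  have "(\<lambda>k. qf n A (xs (r k)) (xs (r k))) \<longlonglongrightarrow> qf n A w w"
    unfolding qf_def by (intro tendsto_sum tendsto_mult tendsto_const lw) auto
  moreover have "(\<lambda>k. qf n A (xs (r k)) (xs (r k))) \<longlonglongrightarrow> \<sigma>"
  proof (rule tendsto_sandwich[OF _ _ LIMSEQ_inverse_real_of_nat_add_minus[of \<sigma>] tendsto_const])
    show "\<forall>\<^sub>F k in sequentially. \<sigma> + - inverse (real (Suc k)) \<le> qf n A (xs (r k)) (xs (r k))"
    proof (intro always_eventually allI)
      fix k
      have "k \<le> r k" using seq_suble[OF r] .
      then have "inverse (real (Suc (r k))) \<le> inverse (real (Suc k))"
        by (intro le_imp_inverse_le) auto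
      then show "\<sigma> + - inverse (real (Suc k)) \<le> qf n A (xs (r k)) (xs (r k))"
        using xs2[of "r k"] by linarith
    qed
    show "\<forall>\<^sub>F k in sequentially. qf n A (xs (r k)) (xs (r k)) \<le> \<sigma>"
      using up xs1 by simp
  qed
  ultimately have "qf n A w w = \<sigma>" using LIMSEQ_unique by blast
  then show ?thesis using w1 up by auto
qed


lemma qf_scale: "qf n A (\<lambda>u. c * x u) (\<lambda>u. c * x u) = c^2 * qf n A x x"
  by (simp add: qf_smult_left qf_smult_right power2_eq_square)

lemma nsq_scale: "nsq n (\<lambda>u. c * x u) = c^2 * nsq n x"
  unfolding nsq_def by (simp add: power_mult_distrib sum_distrib_left)

lemma nsq_nonneg: "nsq n x \<ge> 0"
  unfolding nsq_def by (simp add: sum_nonneg)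

lemma nsq_zero: "nsq n x = 0 \<Longrightarrow> u < n \<Longrightarrow> x u = 0"
  unfolding nsq_def by (subst (asm) sum_nonneg_eq_0_iff) auto

lemma qf_le_max:
  assumes w: "nsq n w = 1" "\<forall>x. nsq n x = 1 \<longrightarrow> qf n A x x \<le> qf n A w w"
  shows "qf n A x x \<le> qf n A w w * nsq n x"
proof (cases "nsq n x = 0")
  case True
  then have "qf n A x x = 0" unfolding qf_def using nsq_zero[OF True] by simp
  then show ?thesis using True by simp
next
  case False
  then have pos: "nsq n x > 0" using nsq_nonneg[of n x] by simp
  define c where "c = 1 / sqrt (nsq n x)"
  have c2: "c^2 = 1 / nsq n x" unfolding c_def using pos by (simp add: power_divide)
  have "nsq n (\<lambda>u. c * x u) = 1" unfolding nsq_scale c2 using pos by simp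
  then have "qf n A (\<lambda>u. c * x u) (\<lambda>u. c * x u) \<le> qf n A w w" using w by blast
  then have "qf n A x x / nsq n x \<le> qf n A w w" unfolding qf_scale c2 by simp
  then show ?thesis using pos by (simp add: divide_le_eq mult.commute)
qed

lemma max_eigen:
  assumes S: "symm n A" and w: "nsq n w = 1" "\<forall>x. nsq n x = 1 \<longrightarrow> qf n A x x \<le> qf n A w w"
    and u: "u < n"
  shows "(\<Sum>v<n. A u v * w v) = qf n A w w * w u"
proof -
  define \<sigma> where "\<sigma> = qf n A w w"
  define y where "y = (\<lambda>v. if v = u then (1::real) else 0)"
  have "\<And>t. (2 * (\<sigma> * (\<Sum>v<n. w v * y v)) - 2 * qf n A w y) * t + (\<sigma> * nsq n y - qf n A y y) * t^2 \<ge> 0"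
  proof -
    fix t
    have "qf n A (\<lambda>v. w v + t * y v) (\<lambda>v. w v + t * y v) \<le> \<sigma> * nsq n (\<lambda>v. w v + t * y v)"
      unfolding \<sigma>_def by (rule qf_le_max[OF w])
    then show "(2 * (\<sigma> * (\<Sum>v<n. w v * y v)) - 2 * qf n A w y) * t + (\<sigma> * nsq n y - qf n A y y) * t^2 \<ge> 0"
      unfolding qf_expand[OF S] nsq_expand w(1) by (simp add: algebra_simps \<sigma>_def)
  qed
  from quad_nonneg_zero[OF this] have e: "qf n A w y = \<sigma> * (\<Sum>v<n. w v * y v)" by simp
  have "(\<Sum>v<n. w v * y v) = w u" unfolding y_def using u by (simp add: if_distrib cong: if_cong)
  moreover have "qf n A w y = (\<Sum>v<n. A u v * w v)"
  proof -
    have "qf n A w y = (\<Sum>v<n. w v * A v u)"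
      unfolding qf_def y_def using u by (simp add: if_distrib cong: if_cong)
    also have "\<dots> = (\<Sum>v<n. A u v * w v)"
      using S u unfolding symm_def by (intro sum.cong) auto
    finally show ?thesis .
  qed
  ultimately show ?thesis using e unfolding \<sigma>_def by simp
qed


lemma mult_mat_vec_sum:
  assumes "L \<in> carrier_mat n n" "x \<in> carrier_vec n" "u < n"
  shows "(L *\<^sub>v x) $ u = (\<Sum>v<n. L $$ (u,v) * x $ v)"
  using assms by (simp add: scalar_prod_def lessThan_atLeast0)

lemma vnorm2_nsq: "x \<in> carrier_vec n \<Longrightarrow> vnorm2 x = sqrt (nsq n (\<lambda>u. x $ u))"
  unfolding vnorm2_def nsq_def by simp

lemma op_bound:
  fixes L :: "real mat"
  assumes L: "L \<in> carrier_mat n n" and n: "n \<ge> 1"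
   and sym: "\<And>u v. u < n \<Longrightarrow> v < n \<Longrightarrow> L $$ (u,v) = L $$ (v,u)"
   and psd: "\<And>x. qf n (\<lambda>u v. L $$ (u,v)) x x \<ge> 0"
  shows "lambda_max L \<ge> 0 \<and> (\<forall>x \<in> carrier_vec n. vnorm2 (L *\<^sub>v x) \<le> lambda_max L * vnorm2 x)"
proof -
  define A where "A = (\<lambda>u v. L $$ (u,v))"
  have S: "symm n A" unfolding symm_def A_def using sym by auto
  obtain w where w: "nsq n w = 1" "\<forall>x. nsq n x = 1 \<longrightarrow> qf n A x x \<le> qf n A w w"
    using max_exists[OF n] by blast
  define \<sigma> where "\<sigma> = qf n A w w"
  have s0: "\<sigma> \<ge> 0" unfolding \<sigma>_def A_def by (rule psd)
  have "eigenvector L (vec n w) \<sigma>"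
    unfolding eigenvector_def
  proof (intro conjI)
    show "vec n w \<in> carrier_vec (dim_row L)" using L by simp
    show "vec n w \<noteq> 0\<^sub>v (dim_row L)"
    proof
      assume "vec n w = 0\<^sub>v (dim_row L)"
      then have "\<And>u. u < n \<Longrightarrow> w u = 0" using L by (metis carrier_matD(1) index_vec index_zero_vec(1))
      then have "nsq n w = 0" unfolding nsq_def by simp
      then show False using w by simp
    qed
    show "L *\<^sub>v vec n w = \<sigma> \<cdot>\<^sub>v vec n w"
    proof (rule eq_vecI)
      fix u assume "u < dim_vec (\<sigma> \<cdot>\<^sub>v vec n w)"
      then have u: "u < n" by simp
      have "(L *\<^sub>v vec n w) $ u = (\<Sum>v<n. A u v * w v)"
        using mult_mat_vec_sum[OF L _ u, of "vec n w"] unfolding A_def by simp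
      also have "\<dots> = \<sigma> * w u" unfolding \<sigma>_def by (rule max_eigen[OF S w u])
      finally show "(L *\<^sub>v vec n w) $ u = (\<sigma> \<cdot>\<^sub>v vec n w) $ u" using u by simp
    qed (use L in simp)
  qed
  then have ev: "eigenvalue L \<sigma>" unfolding eigenvalue_def by blast
  have fin: "finite {x. eigenvalue L x}" using card_finite_spectrum(1)[OF L] unfolding spectrum_def .
  have sl: "\<sigma> \<le> lambda_max L" unfolding lambda_max_def using fin ev by (simp add: Max_ge)
  have l0: "lambda_max L \<ge> 0" using s0 sl by simp
  have qle: "qf n A x x \<le> lambda_max L * nsq n x" for x
  proof -
    have "qf n A x x \<le> \<sigma> * nsq n x" unfolding \<sigma>_def by (rule qf_le_max[OF w])
    also have "\<dots> \<le> lambda_max L * nsq n x" using sl nsq_nonneg[of n x] by (intro mult_right_mono) auto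
    finally show ?thesis .
  qed
  have "vnorm2 (L *\<^sub>v x) \<le> lambda_max L * vnorm2 x" if x: "x \<in> carrier_vec n" for x
  proof -
    define xf where "xf = (\<lambda>u. x $ u)"
    define m where "m = (\<lambda>u. \<Sum>v<n. A u v * xf v)"
    have m_def': "m = (\<lambda>u. \<Sum>v<n. A u v * xf v)" unfolding m_def ..
    have Lx: "L *\<^sub>v x \<in> carrier_vec n" using L x by simp
    have mi: "(L *\<^sub>v x) $ u = m u" if "u < n" for u
      using mult_mat_vec_sum[OF L x that] unfolding m_def' A_def xf_def by simp
    define N where "N = nsq n m"
    have N: "nsq n (\<lambda>u. (L *\<^sub>v x) $ u) = N" unfolding N_def nsq_def using mi by simp
    have qm: "qf n A m xf = N" unfolding qf_def N_def nsq_def m_def' by (simp add: power2_eq_square)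
    have N0: "N \<ge> 0" unfolding N_def by (rule nsq_nonneg)
    have psdA: "\<And>z. qf n A z z \<ge> 0" unfolding A_def by (rule psd)
    have "N^2 \<le> qf n A m m * qf n A xf xf" using qf_cs[OF S psdA, of m xf] qm by simp
    also have "\<dots> \<le> (lambda_max L * N) * (lambda_max L * nsq n xf)"
      using qle[of m] qle[of xf] psdA[of m] psdA[of xf] unfolding N_def by (intro mult_mono) auto
    finally have "N * N \<le> N * (lambda_max L ^ 2 * nsq n xf)" by (simp add: power2_eq_square algebra_simps)
    then have NN: "N \<le> lambda_max L ^ 2 * nsq n xf"
      using N0 nsq_nonneg[of n xf] l0
      by (cases "N = 0") (auto simp: mult_le_cancel_left)
    have "vnorm2 (L *\<^sub>v x) = sqrt N" using vnorm2_nsq[OF Lx] N by simp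
    also have "\<dots> \<le> sqrt (lambda_max L ^ 2 * nsq n xf)" using NN by simp
    also have "\<dots> = lambda_max L * vnorm2 x"
      using l0 vnorm2_nsq[OF x] unfolding xf_def by (simp add: real_sqrt_mult)
    finally show ?thesis .
  qed
  with l0 show ?thesis by blast
qed



definition cc :: "real \<Rightarrow> nat \<Rightarrow> real" where
  "cc s m = (- s)^m / fact m"

definition WVf :: "nat \<Rightarrow> nat \<Rightarrow> real \<Rightarrow> nat \<Rightarrow> real mat" where
  "WVf d k s l = mat (d+2*k) (d+2*k) (\<lambda>(a,b). if a = b \<and> d \<le> a \<and> a < d+k then - (s / real (Suc l)) else 0)"

definition WKf :: "nat \<Rightarrow> nat \<Rightarrow> real mat" where
  "WKf d k = mat (d+2*k) (d+2*k) (\<lambda>(a,b). if a = b \<and> a < d then 1 else 0)"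

definition WRf :: "nat \<Rightarrow> nat \<Rightarrow> real mat" where
  "WRf d k = mat (d+2*k) (d+2*k) (\<lambda>(a,b). if a = b \<and> d \<le> a \<and> a < d+k then -1
      else if d+k \<le> a \<and> b = a - k then 1 else 0)"

definition Zinv :: "nat \<Rightarrow> nat \<Rightarrow> nat \<Rightarrow> real mat \<Rightarrow> real mat \<Rightarrow> real \<Rightarrow> nat \<Rightarrow> real mat" where
  "Zinv n d k B Psi s l = mat (d+2*k) n (\<lambda>(a,v).
     if a < d then B $$ (v,a)
     else if a < d+k then cc s l * (transpose_mat Psi * (laplacian B ^\<^sub>m l)) $$ (a-d,v)
     else (\<Sum>m<l. cc s m * (transpose_mat Psi * (laplacian B ^\<^sub>m m)) $$ (a-d-k,v)))"

lemma diag_mult_entry: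
  assumes Z: "Z \<in> carrier_mat D n" and a: "a < D" and v: "v < n"
  shows "(mat D D (\<lambda>(a,b). if a = b \<and> P a then \<alpha> else 0) * Z) $$ (a,v) = (if P a then \<alpha> * Z $$ (a,v) else 0)"
proof -
  have "(mat D D (\<lambda>(a,b). if a = b \<and> P a then \<alpha> else 0) * Z) $$ (a,v)
      = (\<Sum>b\<in>{0..<D}. (if a = b \<and> P a then \<alpha> else 0) * Z $$ (b,v))"
    using Z a v by (simp add: scalar_prod_def)
  also have "\<dots> = (\<Sum>b\<in>{0..<D}. if b = a then (if P a then \<alpha> * Z $$ (b,v) else 0) else 0)"
    by (intro sum.cong) auto
  also have "\<dots> = (if P a then \<alpha> * Z $$ (a,v) else 0)" using a by (simp add: sum.delta')
  finally show ?thesis .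
qed

lemma WR_entry:
  assumes Z: "Z \<in> carrier_mat (d+2*k) n" and a: "a < d+2*k" and v: "v < n" and k: "k \<ge> 1"
  shows "(WRf d k * Z) $$ (a,v) = (if d \<le> a \<and> a < d+k then - Z $$ (a,v) else if d+k \<le> a then Z $$ (a-k,v) else 0)"
proof -
  have "(WRf d k * Z) $$ (a,v) = (\<Sum>b\<in>{0..<d+2*k}. (if a = b \<and> d \<le> a \<and> a < d+k then -1
      else if d+k \<le> a \<and> b = a - k then 1 else 0) * Z $$ (b,v))"
    using Z a v by (simp add: scalar_prod_def WRf_def)
  also have "\<dots> = (\<Sum>b\<in>{0..<d+2*k}. if b = (if d+k \<le> a then a - k else a) then
      (if d \<le> a \<and> a < d+k then - Z $$ (b,v) else if d+k \<le> a then Z $$ (b,v) else 0) else 0)"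
    using k by (intro sum.cong) auto
  also have "\<dots> = (if d \<le> a \<and> a < d+k then - Z $$ (a,v) else if d+k \<le> a then Z $$ (a-k,v) else 0)"
  proof -
    define c where "c = (if d+k \<le> a then a - k else a)"
    have c: "c < d + 2*k" using a unfolding c_def by auto
    show ?thesis unfolding c_def[symmetric] using c by (simp add: sum.delta') (auto simp: c_def)
  qed
  finally show ?thesis .
qed


lemma Zinv_carrier[simp]: "Zinv n d k B Psi s l \<in> carrier_mat (d+2*k) n"
  unfolding Zinv_def by simp

lemma Zinv_dims[simp]: "dim_row (Zinv n d k B Psi s l) = d+2*k" "dim_col (Zinv n d k B Psi s l) = n"
  unfolding Zinv_def by simp_all

lemma lap_carrier: "B \<in> carrier_mat n d \<Longrightarrow> laplacian B \<in> carrier_mat n n"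
  unfolding laplacian_def by simp

lemma sum_if_less:
  fixes d D :: nat
  assumes "d \<le> D" shows "(\<Sum>a\<in>{0..<D}. (if a < d then f a else 0)) = (\<Sum>a\<in>{0..<d}. f a)"
proof -
  have "(\<Sum>a\<in>{0..<D}. (if a < d then f a else 0)) = (\<Sum>a\<in>{0..<D} \<inter> {a. a < d}. f a)"
    by (subst sum.inter_restrict) auto
  also have "{0..<D} \<inter> {a. a < d} = {0..<d}" using assms by auto
  finally show ?thesis .
qed

lemma gram:
  fixes k l :: nat and Psi :: "real mat" and s :: real
  assumes B: "B \<in> carrier_mat n d"
  defines "Z \<equiv> Zinv n d k B Psi s l"
  shows "transpose_mat Z * WKf d k * Z = laplacian B"
proof -
  have Z: "Z \<in> carrier_mat (d+2*k) n" unfolding Z_def by simp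
  have WK: "WKf d k \<in> carrier_mat (d+2*k) (d+2*k)" unfolding WKf_def by simp
  have WKT: "transpose_mat (WKf d k) = WKf d k" unfolding WKf_def by (rule eq_matI) auto
  have "transpose_mat Z * WKf d k = transpose_mat (WKf d k * Z)"
    using transpose_mult[OF WK Z] WKT by simp
  then have e: "transpose_mat Z * WKf d k * Z = transpose_mat (WKf d k * Z) * Z" by simp
  show ?thesis unfolding e
  proof (rule eq_matI)
    show "dim_row (transpose_mat (WKf d k * Z) * Z) = dim_row (laplacian B)"
      using Z B WK lap_carrier[OF B] by simp
    show "dim_col (transpose_mat (WKf d k * Z) * Z) = dim_col (laplacian B)"
      using Z B WK lap_carrier[OF B] by simp
    fix u v assume "u < dim_row (laplacian B)" "v < dim_col (laplacian B)"
    then have u: "u < n" and v: "v < n" using lap_carrier[OF B] by auto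
    have "(transpose_mat (WKf d k * Z) * Z) $$ (u,v) = (\<Sum>a\<in>{0..<d+2*k}. (WKf d k * Z) $$ (a,u) * Z $$ (a,v))"
      using Z WK u v by (simp add: scalar_prod_def)
    also have "\<dots> = (\<Sum>a\<in>{0..<d+2*k}. (if a < d then Z $$ (a,u) * Z $$ (a,v) else 0))"
    proof (intro sum.cong refl)
      fix a assume "a \<in> {0..<d+2*k}"
      then have a: "a < d+2*k" by simp
      have "(WKf d k * Z) $$ (a,u) = (if a < d then 1 * Z $$ (a,u) else 0)"
        unfolding WKf_def using diag_mult_entry[OF Z a u, of "\<lambda>a. a < d" 1] by simp
      then show "(WKf d k * Z) $$ (a,u) * Z $$ (a,v) = (if a < d then Z $$ (a,u) * Z $$ (a,v) else 0)" by simp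
    qed
    also have "\<dots> = (\<Sum>a\<in>{0..<d}. Z $$ (a,u) * Z $$ (a,v))" by (rule sum_if_less) simp
    also have "\<dots> = (\<Sum>a\<in>{0..<d}. B $$ (u,a) * B $$ (v,a))"
      by (intro sum.cong refl) (simp add: Z_def Zinv_def u v)
    also have "\<dots> = laplacian B $$ (u,v)"
      unfolding laplacian_def using B u v by (simp add: scalar_prod_def)
    finally show "(transpose_mat (WKf d k * Z) * Z) $$ (u,v) = laplacian B $$ (u,v)" .
  qed
qed


lemma mult_entry:
  assumes "A \<in> carrier_mat r m" "B \<in> carrier_mat m c" "i < r" "j < c"
  shows "(A * B) $$ (i,j) = (\<Sum>u\<in>{0..<m}. A $$ (i,u) * B $$ (u,j))"
  using assms by (simp add: scalar_prod_def)

lemma pow_step_entry: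
  assumes P: "P \<in> carrier_mat k n" and Lc: "Lp \<in> carrier_mat n n" and i: "i < k" and v: "v < n"
  shows "(P * (Lp ^\<^sub>m Suc l)) $$ (i,v) = (\<Sum>u\<in>{0..<n}. (P * (Lp ^\<^sub>m l)) $$ (i,u) * Lp $$ (u,v))"
proof -
  have "P * (Lp ^\<^sub>m Suc l) = (P * (Lp ^\<^sub>m l)) * Lp"
    using P Lc by (simp add: assoc_mult_mat[symmetric, of P k n "Lp ^\<^sub>m l" n Lp n])
  then show ?thesis using P Lc i v by (simp add: scalar_prod_def)
qed

lemma cc_Suc: "cc s (Suc l) = - (s / real (Suc l)) * cc s l"
  unfolding cc_def by (simp add: field_simps)

lemma layer_step:
  fixes k l n d :: nat and Psi B :: "real mat" and s :: real
  assumes B: "B \<in> carrier_mat n d" and Psi: "Psi \<in> carrier_mat n k" and k: "k \<ge> 1"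
  shows "tf_layer (WVf d k s l) (1\<^sub>m (d+2*k)) (WKf d k) (WRf d k) (Zinv n d k B Psi s l)
       = Zinv n d k B Psi s (Suc l)"
proof -
  define Z where "Z = Zinv n d k B Psi s l"
  define D where "D = d+2*k"
  define Lp where "Lp = laplacian B"
  define \<alpha> where "\<alpha> = - (s / real (Suc l))"
  define Pt where "Pt = transpose_mat Psi"
  have Pt: "Pt \<in> carrier_mat k n" unfolding Pt_def using Psi by simp
  have Z: "Z \<in> carrier_mat D n" unfolding Z_def D_def by simp
  have Lc: "Lp \<in> carrier_mat n n" unfolding Lp_def by (rule lap_carrier[OF B])
  have WV: "WVf d k s l \<in> carrier_mat D D" unfolding WVf_def D_def by simp
  have WK: "WKf d k \<in> carrier_mat D D" unfolding WKf_def D_def by simp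
  have WR: "WRf d k \<in> carrier_mat D D" unfolding WRf_def D_def by simp
  have G: "transpose_mat Z * WKf d k * Z = Lp" unfolding Z_def Lp_def by (rule gram[OF B])
  have ZT: "transpose_mat Z \<in> carrier_mat n D" using Z by simp
  have WVZ: "WVf d k s l * Z \<in> carrier_mat D n" using WV Z by simp
  have X: "WVf d k s l * Z * transpose_mat Z * transpose_mat (1\<^sub>m D) * WKf d k * Z = (WVf d k s l * Z) * Lp"
  proof -
    have "WVf d k s l * Z * transpose_mat Z * transpose_mat (1\<^sub>m D) = WVf d k s l * Z * transpose_mat Z"
      using WVZ ZT by simp
    moreover have "WVf d k s l * Z * transpose_mat Z * WKf d k = (WVf d k s l * Z) * (transpose_mat Z * WKf d k)"
      using assoc_mult_mat[OF WVZ ZT WK] .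
    moreover have "(WVf d k s l * Z) * (transpose_mat Z * WKf d k) * Z = (WVf d k s l * Z) * (transpose_mat Z * WKf d k * Z)"
      using assoc_mult_mat[OF WVZ _ Z, of "transpose_mat Z * WKf d k"] ZT WK by simp
    ultimately show ?thesis using G by simp
  qed
  have WVe: "(WVf d k s l * Z) $$ (a,u) = (if d \<le> a \<and> a < d+k then \<alpha> * Z $$ (a,u) else 0)"
    if "a < D" "u < n" for a u
    unfolding WVf_def \<alpha>_def D_def[symmetric]
    using diag_mult_entry[OF Z that, of "\<lambda>a. d \<le> a \<and> a < d+k" "- (s / real (Suc l))"] by simp
  have Xe: "((WVf d k s l * Z) * Lp) $$ (a,v) = (if d \<le> a \<and> a < d+k then
        \<alpha> * (\<Sum>u\<in>{0..<n}. Z $$ (a,u) * Lp $$ (u,v)) else 0)"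
    if a: "a < D" and v: "v < n" for a v
  proof -
    have "((WVf d k s l * Z) * Lp) $$ (a,v) = (\<Sum>u\<in>{0..<n}. (WVf d k s l * Z) $$ (a,u) * Lp $$ (u,v))"
      by (rule mult_entry[OF WVZ Lc a v])
    also have "\<dots> = (\<Sum>u\<in>{0..<n}. (if d \<le> a \<and> a < d+k then \<alpha> * (Z $$ (a,u) * Lp $$ (u,v)) else 0))"
      using WVe a by (intro sum.cong refl) auto
    finally show ?thesis by (cases "d \<le> a \<and> a < d+k") (auto simp: sum_distrib_left)
  qed
  have WRe: "(WRf d k * Z) $$ (a,v) = (if d \<le> a \<and> a < d+k then - Z $$ (a,v) else if d+k \<le> a then Z $$ (a-k,v) else 0)"
    if "a < D" "v < n" for a v
    using WR_entry[of Z d k n a v] Z that k unfolding D_def by simp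
  show ?thesis
    unfolding tf_layer_def Z_def[symmetric] D_def[symmetric] X
  proof (rule eq_matI)
    show "dim_row (Z + WVf d k s l * Z * Lp + WRf d k * Z) = dim_row (Zinv n d k B Psi s (Suc l))"
      using Z WV WR Lc unfolding D_def by simp
    show "dim_col (Z + WVf d k s l * Z * Lp + WRf d k * Z) = dim_col (Zinv n d k B Psi s (Suc l))"
      using Z WV WR Lc unfolding D_def by simp
    fix a v assume "a < dim_row (Zinv n d k B Psi s (Suc l))" "v < dim_col (Zinv n d k B Psi s (Suc l))"
    then have a: "a < D" and v: "v < n" unfolding D_def by auto
    have e1: "(Z + WVf d k s l * Z * Lp + WRf d k * Z) $$ (a,v)
        = Z $$ (a,v) + (WVf d k s l * Z * Lp) $$ (a,v) + (WRf d k * Z) $$ (a,v)"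
      using Z WV WR Lc a v by simp
    have Ze: "Z $$ (a,v) = (if a < d then B $$ (v,a)
     else if a < d+k then cc s l * (Pt * (Lp ^\<^sub>m l)) $$ (a-d,v)
     else (\<Sum>m<l. cc s m * (Pt * (Lp ^\<^sub>m m)) $$ (a-d-k,v)))"
      unfolding Z_def Zinv_def Pt_def Lp_def using a v unfolding D_def by simp
    have Ze': "Zinv n d k B Psi s (Suc l) $$ (a,v) = (if a < d then B $$ (v,a)
     else if a < d+k then cc s (Suc l) * (Pt * (Lp ^\<^sub>m Suc l)) $$ (a-d,v)
     else (\<Sum>m<Suc l. cc s m * (Pt * (Lp ^\<^sub>m m)) $$ (a-d-k,v)))"
      unfolding Zinv_def Pt_def Lp_def using a v unfolding D_def by simp
    show "(Z + WVf d k s l * Z * Lp + WRf d k * Z) $$ (a,v) = Zinv n d k B Psi s (Suc l) $$ (a,v)"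
    proof (cases "a < d")
      case True
      then show ?thesis unfolding e1 Ze' using Ze Xe[OF a v] WRe[OF a v] by simp
    next
      case False
      show ?thesis
      proof (cases "a < d+k")
        case True
        have "(\<Sum>u\<in>{0..<n}. Z $$ (a,u) * Lp $$ (u,v))
            = (\<Sum>u\<in>{0..<n}. cc s l * ((Pt * (Lp ^\<^sub>m l)) $$ (a-d,u) * Lp $$ (u,v)))"
          using False True a unfolding Z_def Zinv_def Pt_def Lp_def D_def by (intro sum.cong refl) auto
        also have "\<dots> = cc s l * (Pt * (Lp ^\<^sub>m Suc l)) $$ (a-d,v)"
          using pow_step_entry[OF Pt Lc _ v, of "a-d" l] False True by (simp add: sum_distrib_left)
        finally have "(WVf d k s l * Z * Lp) $$ (a,v) = cc s (Suc l) * (Pt * (Lp ^\<^sub>m Suc l)) $$ (a-d,v)"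
          using Xe[OF a v] False True unfolding cc_Suc \<alpha>_def by simp
        then show ?thesis unfolding e1 Ze' using Ze WRe[OF a v] False True by simp
      next
        case False2: False
        have "Z $$ (a-k,v) = cc s l * (Pt * (Lp ^\<^sub>m l)) $$ (a-d-k,v)"
        proof -
          have idx: "a - k < d + 2*k" "\<not> (a - k < d)" "a - k < d + k" "a - k - d = a - d - k"
            using False False2 a unfolding D_def by auto
          show ?thesis unfolding Z_def Zinv_def Pt_def Lp_def using idx v by (simp only: index_mat split) simp
        qed
        then show ?thesis unfolding e1 Ze' using Ze Xe[OF a v] WRe[OF a v] False False2 by simp
      qed
    qed
  qed
qed



lemma run_inv:
  assumes B: "B \<in> carrier_mat n d" and Psi: "Psi \<in> carrier_mat n k" and k: "k \<ge> 1"
  shows "tf_run (WVf d k s) (\<lambda>_. 1\<^sub>m (d+2*k)) (\<lambda>_. WKf d k) (\<lambda>_. WRf d k) l (input_Z0 n d k B Psi)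
       = Zinv n d k B Psi s l"
proof (induction l)
  case 0
  have Lc: "laplacian B \<in> carrier_mat n n" by (rule lap_carrier[OF B])
  have "input_Z0 n d k B Psi = Zinv n d k B Psi s 0"
  proof (rule eq_matI)
    fix a v assume "a < dim_row (Zinv n d k B Psi s 0)" "v < dim_col (Zinv n d k B Psi s 0)"
    then have a: "a < d+2*k" and v: "v < n" by auto
    have "laplacian B ^\<^sub>m 0 = 1\<^sub>m n" using Lc by simp
    then have "transpose_mat Psi * (laplacian B ^\<^sub>m 0) = transpose_mat Psi" using Psi by simp
    then show "input_Z0 n d k B Psi $$ (a,v) = Zinv n d k B Psi s 0 $$ (a,v)"
      unfolding input_Z0_def Zinv_def using a v Psi by (simp add: cc_def)
  qed (auto simp: input_Z0_def)
  then show ?case by simp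
next
  case (Suc l)
  then show ?case using layer_step[OF B Psi k] by simp
qed

lemma pow_comm:
  fixes L :: "real mat"
  assumes L: "L \<in> carrier_mat n n"
  shows "L ^\<^sub>m m * L = L * L ^\<^sub>m m"
proof (induction m)
  case 0 then show ?case using L by simp
next
  case (Suc m)
  have "L ^\<^sub>m Suc m * L = (L ^\<^sub>m m * L) * L" by simp
  also have "\<dots> = (L * L ^\<^sub>m m) * L" using Suc by simp
  also have "\<dots> = L * (L ^\<^sub>m m * L)" using L by (simp add: assoc_mult_mat[of _ n n _ n _ n])
  finally show ?case by simp
qed

lemma pow_sym:
  fixes L :: "real mat"
  assumes L: "L \<in> carrier_mat n n" and S: "transpose_mat L = L"
  shows "transpose_mat (L ^\<^sub>m m) = L ^\<^sub>m m"
proof (induction m)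
  case 0 then show ?case using L by simp
next
  case (Suc m)
  have "transpose_mat (L ^\<^sub>m Suc m) = transpose_mat L * transpose_mat (L ^\<^sub>m m)"
    using transpose_mult[OF pow_carrier_mat[OF L, of m] L] by simp
  also have "\<dots> = L * L ^\<^sub>m m" using Suc S by simp
  also have "\<dots> = L ^\<^sub>m Suc m" using pow_comm[OF L, of m] by simp
  finally show ?case .
qed

lemma pow_smult:
  fixes L :: "real mat"
  assumes L: "L \<in> carrier_mat n n"
  shows "(c \<cdot>\<^sub>m L) ^\<^sub>m m = (c ^ m) \<cdot>\<^sub>m (L ^\<^sub>m m)"
proof (induction m)
  case 0 then show ?case using L by (auto intro!: eq_matI)
next
  case (Suc m)
  have "(c \<cdot>\<^sub>m L) ^\<^sub>m Suc m = ((c ^ m) \<cdot>\<^sub>m (L ^\<^sub>m m)) * (c \<cdot>\<^sub>m L)" using Suc by simp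
  also have "\<dots> = (c ^ m) \<cdot>\<^sub>m ((L ^\<^sub>m m) * (c \<cdot>\<^sub>m L))"
    using mult_smult_assoc_mat[OF pow_carrier_mat[OF L, of m] smult_carrier_mat[OF L], of "c^m" c] by simp
  also have "\<dots> = (c ^ m) \<cdot>\<^sub>m (c \<cdot>\<^sub>m (L ^\<^sub>m m * L))"
    using L by (simp add: mult_smult_distrib[of _ n n _ n])
  also have "\<dots> = (c ^ Suc m) \<cdot>\<^sub>m (L ^\<^sub>m Suc m)" by (rule eq_matI) auto
  finally show ?case .
qed



lemma exp_sums_real: "(\<lambda>m. (x::real)^m / fact m) sums exp x"
proof -
  have "(\<lambda>m. x^m /\<^sub>R fact m) sums exp x"
    using summable_exp_generic[of x] unfolding exp_def by (simp add: summable_sums)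
  then show ?thesis by (simp add: divide_inverse mult.commute)
qed

lemma ln2_ge: "ln (2::real) \<ge> 1/4"
proof -
  have "(1/2::real) - (1/2)^2 \<le> ln (1 + 1/2)" by (rule ln_one_plus_pos_lower_bound) auto
  also have "\<dots> \<le> ln 2" by simp
  finally show ?thesis by (simp add: power2_eq_square)
qed

lemma exp_le_powr: "(x::real) \<ge> 0 \<Longrightarrow> exp (2 * x) \<le> 2 powr (8 * x)"
proof -
  assume x: "x \<ge> 0"
  have "2 * x \<le> 8 * x * ln 2" using ln2_ge x by (simp add: mult_left_mono[of "1/4" "ln 2" "8*x", simplified])
  then show ?thesis unfolding powr_def by simp
qed

lemma tail_bound:
  fixes x :: real assumes x: "x \<ge> 0"
  shows "summable (\<lambda>j. x^(j+N) / fact (j+N)) \<and> (\<Sum>j. x^(j+N) / fact (j+N)) \<le> 2 powr (- real N + 8 * x + 1)"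
proof -
  define f where "f m = (2*x)^m / fact m" for m
  have sf: "summable f" unfolding f_def using exp_sums_real sums_summable by blast
  have sfN: "summable (\<lambda>j. f (j+N))" using summable_ignore_initial_segment[OF sf] .
  have le: "x^(j+N) / fact (j+N) \<le> (1/2)^N * f (j+N)" for j
  proof -
    have "x^(j+N) = ((1/2) * (2*x))^(j+N)" by simp
    also have "\<dots> = (1/2)^(j+N) * (2*x)^(j+N)" by (rule power_mult_distrib)
    also have "\<dots> \<le> (1/2)^N * (2*x)^(j+N)"
      using x by (intro mult_right_mono power_decreasing) auto
    finally have h: "x^(j+N) \<le> (1/2)^N * (2*x)^(j+N)" .
    have "x^(j+N) / fact (j+N) \<le> (1/2)^N * (2*x)^(j+N) / fact (j+N)"
      by (rule divide_right_mono[OF h]) simp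
    also have "\<dots> = (1/2)^N * f (j+N)" unfolding f_def by simp
    finally show ?thesis .
  qed
  have su: "summable (\<lambda>j. (1/2)^N * f (j+N))" using summable_mult[OF sfN] .
  have s1: "summable (\<lambda>j. x^(j+N) / fact (j+N))"
    by (rule summable_comparison_test[OF _ su]) (use le x in auto)
  have "(\<Sum>j. x^(j+N) / fact (j+N)) \<le> (\<Sum>j. (1/2)^N * f (j+N))"
    by (rule suminf_le[OF _ s1 su]) (use le in auto)
  also have "\<dots> = (1/2)^N * (\<Sum>j. f (j+N))" using suminf_mult[OF sfN] .
  also have "(\<Sum>j. f (j+N)) \<le> exp (2*x)"
  proof -
    have "suminf f = (\<Sum>j. f (j+N)) + sum f {..<N}" by (rule suminf_split_initial_segment[OF sf])
    moreover have "sum f {..<N} \<ge> 0" unfolding f_def using x by (intro sum_nonneg) auto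
    moreover have "suminf f = exp (2*x)" unfolding f_def using exp_sums_real sums_unique by metis
    ultimately show ?thesis by linarith
  qed
  then have "(1/2)^N * (\<Sum>j. f (j+N)) \<le> (1/2)^N * exp (2*x)" by (intro mult_left_mono) auto
  also have "\<dots> \<le> (1/2)^N * 2 powr (8*x)" using exp_le_powr[OF x] by (intro mult_left_mono) auto
  also have "(1/2::real)^N = 2 powr (- real N)"
  proof -
    have "2 powr (- real N) = inverse (2 powr real N)" by (rule powr_minus)
    also have "2 powr real N = (2::real)^N" by (rule powr_realpow) simp
    also have "inverse ((2::real)^N) = 1 / 2^N" by (rule inverse_eq_divide)
    also have "\<dots> = (1/2)^N" by (rule power_one_over[symmetric])
    finally show ?thesis by simp
  qed
  also have "2 powr (- real N) * 2 powr (8*x) \<le> 2 powr (- real N + 8 * x + 1)"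
    by (simp add: powr_add[symmetric])
  finally show ?thesis using s1 by simp
qed



lemma L2_set_partial:
  fixes f :: "nat \<Rightarrow> nat \<Rightarrow> real"
  shows "L2_set (\<lambda>v. \<Sum>j<N. f j v) A \<le> (\<Sum>j<N. L2_set (f j) A)"
proof (induction N)
  case 0 then show ?case by (simp add: L2_set_def)
next
  case (Suc N)
  have "L2_set (\<lambda>v. \<Sum>j<Suc N. f j v) A = L2_set (\<lambda>v. (\<Sum>j<N. f j v) + f N v) A" by simp
  also have "\<dots> \<le> L2_set (\<lambda>v. \<Sum>j<N. f j v) A + L2_set (f N) A" by (rule L2_set_triangle_ineq)
  also have "\<dots> \<le> (\<Sum>j<N. L2_set (f j) A) + L2_set (f N) A" using Suc by simp
  finally show ?case by simp
qed

lemma L2_sum_bound: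
  fixes f :: "nat \<Rightarrow> nat \<Rightarrow> real"
  assumes fin: "finite A" and conv: "\<And>v. v \<in> A \<Longrightarrow> (\<lambda>j. f j v) sums G v"
    and bnd: "\<And>j. L2_set (f j) A \<le> h j" and sh: "summable h"
  shows "L2_set G A \<le> suminf h"
proof -
  have h0: "h j \<ge> 0" for j using bnd[of j] L2_set_nonneg[of "f j" A] by linarith
  have lim: "(\<lambda>N. L2_set (\<lambda>v. \<Sum>j<N. f j v) A) \<longlonglongrightarrow> L2_set G A"
    unfolding L2_set_def
    by (intro tendsto_real_sqrt tendsto_sum tendsto_power) (use conv in \<open>auto simp: sums_def\<close>)
  have "L2_set (\<lambda>v. \<Sum>j<N. f j v) A \<le> suminf h" for N
  proof -
    have "L2_set (\<lambda>v. \<Sum>j<N. f j v) A \<le> (\<Sum>j<N. L2_set (f j) A)" by (rule L2_set_partial)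
    also have "\<dots> \<le> (\<Sum>j<N. h j)" using bnd by (intro sum_mono) auto
    also have "\<dots> \<le> suminf h" using sh h0 by (intro sum_le_suminf) auto
    finally show ?thesis .
  qed
  then show ?thesis using LIMSEQ_le_const2[OF lim] by blast
qed

lemma L2_set_scale: "L2_set (\<lambda>v. c * x v) A = \<bar>c\<bar> * L2_set x A"
  unfolding L2_set_def by (simp add: power_mult_distrib sum_distrib_left[symmetric] real_sqrt_mult)

lemma vnorm2_L2: "vnorm2 x = L2_set (\<lambda>v. x $ v) {..<dim_vec x}"
  unfolding vnorm2_def L2_set_def by simp

lemma entry_le_vnorm2:
  assumes "v < dim_vec x" shows "\<bar>x $ v\<bar> \<le> vnorm2 x"
proof -
  have "(x $ v)^2 \<le> (\<Sum>i<dim_vec x. (x $ i)^2)"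
    using assms by (intro member_le_sum) auto
  then have "sqrt ((x $ v)^2) \<le> vnorm2 x" unfolding vnorm2_def by (rule real_sqrt_le_mono)
  then show ?thesis by simp
qed

lemma pow_bound:
  fixes L :: "real mat"
  assumes L: "L \<in> carrier_mat n n" and lam: "lam \<ge> 0"
    and op: "\<forall>x \<in> carrier_vec n. vnorm2 (L *\<^sub>v x) \<le> lam * vnorm2 x"
  shows "x \<in> carrier_vec n \<Longrightarrow> vnorm2 ((L ^\<^sub>m m) *\<^sub>v x) \<le> lam ^ m * vnorm2 x"
proof (induction m arbitrary: x)
  case 0 then show ?case using L by simp
next
  case (Suc m)
  have Lx: "L *\<^sub>v x \<in> carrier_vec n" using L Suc.prems by simp
  have "(L ^\<^sub>m Suc m) *\<^sub>v x = (L ^\<^sub>m m) *\<^sub>v (L *\<^sub>v x)"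
    using L Suc.prems by (simp add: assoc_mult_mat_vec[of _ n n _ n])
  also have "vnorm2 \<dots> \<le> lam ^ m * vnorm2 (L *\<^sub>v x)" by (rule Suc.IH[OF Lx])
  also have "\<dots> \<le> lam ^ m * (lam * vnorm2 x)" using op Suc.prems lam by (intro mult_left_mono) auto
  finally show ?case by (simp add: mult.assoc mult.commute mult.left_commute)
qed



lemma cc_abs: "s \<ge> 0 \<Longrightarrow> \<bar>cc s m\<bar> = s^m / fact m"
  unfolding cc_def by (simp add: power_abs)

lemma vnorm2_unit: "u < n \<Longrightarrow> vnorm2 (unit_vec n u) = 1"
proof -
  assume u: "u < n"
  have "(\<Sum>i<n. (unit_vec n u $ i)^2) = (\<Sum>i<n. if i = u then (1::real) else 0)"
    using u by (intro sum.cong refl) auto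
  also have "\<dots> = 1" using u by simp
  finally show ?thesis unfolding vnorm2_def by simp
qed

lemma main_bound:
  fixes L Psi :: "real mat" and s lam :: real
  assumes L: "L \<in> carrier_mat n n" and sym: "transpose_mat L = L" and lam: "lam \<ge> 0"
    and op: "\<forall>x \<in> carrier_vec n. vnorm2 (L *\<^sub>v x) \<le> lam * vnorm2 x"
    and Psi: "Psi \<in> carrier_mat n k" and i: "i < k" and s: "s \<ge> 0"
  shows "vnorm2 (vec n (\<lambda>v. \<Sum>m<N. cc s m * (transpose_mat Psi * L ^\<^sub>m m) $$ (i,v))
            - mat_exp ((- s) \<cdot>\<^sub>m L) *\<^sub>v col Psi i)
         \<le> 2 powr (- real N + 8 * s * lam + 1) * vnorm2 (col Psi i)"
proof -
  define \<psi> where "\<psi> = col Psi i"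
  have \<psi>c: "\<psi> \<in> carrier_vec n" unfolding \<psi>_def carrier_vec_def using carrier_matD(1)[OF Psi] by simp
  define g where "g m = (L ^\<^sub>m m) *\<^sub>v \<psi>" for m
  have gc: "g m \<in> carrier_vec n" for m unfolding g_def using mult_mat_vec_carrier[OF pow_carrier_mat[OF L] \<psi>c] .
  have gd: "dim_vec (g m) = n" for m using gc[of m] by (rule carrier_vecD)
  have gb: "vnorm2 (g m) \<le> lam ^ m * vnorm2 \<psi>" for m
    unfolding g_def by (rule pow_bound[OF L lam op \<psi>c])
  define x where "x = s * lam"
  have x0: "x \<ge> 0" unfolding x_def using s lam by simp
  have psym: "(L ^\<^sub>m m) $$ (v,u) = (L ^\<^sub>m m) $$ (u,v)" if "u < n" "v < n" for m u v
  proof -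
    have "(L ^\<^sub>m m) $$ (v,u) = transpose_mat (L ^\<^sub>m m) $$ (v,u)" using pow_sym[OF L sym, of m] by simp
    also have "\<dots> = (L ^\<^sub>m m) $$ (u,v)" using that L by simp
    finally show ?thesis .
  qed
  have ent: "(transpose_mat Psi * L ^\<^sub>m m) $$ (i,v) = g m $ v" if v: "v < n" for m v
  proof -
    have "(transpose_mat Psi * L ^\<^sub>m m) $$ (i,v) = (\<Sum>u\<in>{0..<n}. transpose_mat Psi $$ (i,u) * (L ^\<^sub>m m) $$ (u,v))"
      using Psi L i v by (intro mult_entry[of _ k n _ n]) auto
    also have "\<dots> = (\<Sum>u<n. (L ^\<^sub>m m) $$ (v,u) * \<psi> $ u)"
    proof (unfold lessThan_atLeast0[symmetric], intro sum.cong refl)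
      fix u assume "u \<in> {..<n}"
      then have u: "u < n" by simp
      show "transpose_mat Psi $$ (i,u) * (L ^\<^sub>m m) $$ (u,v) = (L ^\<^sub>m m) $$ (v,u) * \<psi> $ u"
        using Psi i u v psym[OF u v, of m] unfolding \<psi>_def by simp
    qed
    also have "\<dots> = g m $ v" unfolding g_def using mult_mat_vec_sum[OF pow_carrier_mat[OF L] \<psi>c v] by simp
    finally show ?thesis .
  qed
  have entb: "\<bar>(L ^\<^sub>m m) $$ (v,u)\<bar> \<le> lam ^ m" if "u < n" "v < n" for m u v
  proof -
    have "(L ^\<^sub>m m) $$ (v,u) = ((L ^\<^sub>m m) *\<^sub>v unit_vec n u) $ v"
      using mult_mat_vec_sum[OF pow_carrier_mat[OF L] _ that(2), of "unit_vec n u" m] that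
      by (simp add: if_distrib cong: if_cong)
    also have "\<bar>\<dots>\<bar> \<le> vnorm2 ((L ^\<^sub>m m) *\<^sub>v unit_vec n u)" using that L by (intro entry_le_vnorm2) simp
    also have "\<dots> \<le> lam ^ m * vnorm2 (unit_vec n u)" by (rule pow_bound[OF L lam op]) simp
    also have "\<dots> = lam ^ m" using vnorm2_unit[OF that(1)] by simp
    finally show ?thesis .
  qed
  have sx: "summable (\<lambda>m. x^m / fact m)" using exp_sums_real sums_summable by blast
  have ccb: "\<bar>cc s m\<bar> * lam ^ m = x^m / fact m" for m
    unfolding cc_abs[OF s] x_def by (simp add: power_mult_distrib)
  have Msum: "(\<lambda>m. cc s m * (L ^\<^sub>m m) $$ (v,u)) sums (mat_exp ((- s) \<cdot>\<^sub>m L) $$ (v,u))"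
    if u: "u < n" and v: "v < n" for u v
  proof -
    have sm: "summable (\<lambda>m. cc s m * (L ^\<^sub>m m) $$ (v,u))"
    proof (rule summable_comparison_test[OF _ sx], intro exI allI impI)
      fix m
      have "\<bar>cc s m * (L ^\<^sub>m m) $$ (v,u)\<bar> \<le> \<bar>cc s m\<bar> * lam ^ m"
        unfolding abs_mult by (intro mult_left_mono entb u v) auto
      then show "norm (cc s m * (L ^\<^sub>m m) $$ (v,u)) \<le> x^m / fact m" using ccb by simp
    qed
    have "mat_exp ((- s) \<cdot>\<^sub>m L) $$ (v,u) = (\<Sum>m. (((- s) \<cdot>\<^sub>m L) ^\<^sub>m m) $$ (v,u) / fact m)"
      unfolding mat_exp_def using L u v by simp
    also have "\<dots> = (\<Sum>m. cc s m * (L ^\<^sub>m m) $$ (v,u))"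
      unfolding pow_smult[OF L] cc_def using L u v by simp
    finally show ?thesis using sm by (simp add: summable_sums)
  qed
  have Esum: "(\<lambda>m. cc s m * g m $ v) sums ((mat_exp ((- s) \<cdot>\<^sub>m L) *\<^sub>v \<psi>) $ v)" if v: "v < n" for v
  proof -
    have ME: "mat_exp ((- s) \<cdot>\<^sub>m L) \<in> carrier_mat n n" unfolding mat_exp_def using L by simp
    have "(\<lambda>m. \<Sum>u<n. cc s m * (L ^\<^sub>m m) $$ (v,u) * \<psi> $ u) sums (\<Sum>u<n. mat_exp ((- s) \<cdot>\<^sub>m L) $$ (v,u) * \<psi> $ u)"
      by (intro sums_sum sums_mult2 Msum v) auto
    moreover have "(\<Sum>u<n. cc s m * (L ^\<^sub>m m) $$ (v,u) * \<psi> $ u) = cc s m * g m $ v" for m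
      unfolding g_def mult_mat_vec_sum[OF pow_carrier_mat[OF L] \<psi>c v] by (simp add: sum_distrib_left mult.assoc)
    moreover have "(\<Sum>u<n. mat_exp ((- s) \<cdot>\<^sub>m L) $$ (v,u) * \<psi> $ u) = (mat_exp ((- s) \<cdot>\<^sub>m L) *\<^sub>v \<psi>) $ v"
      using mult_mat_vec_sum[OF ME \<psi>c v] by simp
    ultimately show ?thesis by simp
  qed
  define E where "E = vec n (\<lambda>v. \<Sum>m<N. cc s m * (transpose_mat Psi * L ^\<^sub>m m) $$ (i,v))
            - mat_exp ((- s) \<cdot>\<^sub>m L) *\<^sub>v \<psi>"
  have ME: "mat_exp ((- s) \<cdot>\<^sub>m L) \<in> carrier_mat n n" unfolding mat_exp_def using L by simp
  have dE: "dim_vec E = n" unfolding E_def using ME by simp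
  define f where "f j v = - (cc s (j+N) * g (j+N) $ v)" for j v
  have fsum: "(\<lambda>j. f j v) sums (E $ v)" if v: "v < n" for v
  proof -
    have es: "summable (\<lambda>m. cc s m * g m $ v)" using Esum[OF v] sums_summable by blast
    have "(\<lambda>j. cc s (j+N) * g (j+N) $ v) sums (\<Sum>j. cc s (j+N) * g (j+N) $ v)"
      using summable_ignore_initial_segment[OF es, of N] by (simp add: summable_sums)
    then have a: "(\<lambda>j. f j v) sums (- (\<Sum>j. cc s (j+N) * g (j+N) $ v))"
      unfolding f_def by (rule sums_minus)
    have "(\<Sum>m. cc s m * g m $ v) = (\<Sum>j. cc s (j+N) * g (j+N) $ v) + (\<Sum>m<N. cc s m * g m $ v)"
      by (rule suminf_split_initial_segment[OF es])
    moreover have "(\<Sum>m. cc s m * g m $ v) = (mat_exp ((- s) \<cdot>\<^sub>m L) *\<^sub>v \<psi>) $ v"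
      using Esum[OF v] sums_unique by metis
    moreover have "E $ v = (\<Sum>m<N. cc s m * g m $ v) - (mat_exp ((- s) \<cdot>\<^sub>m L) *\<^sub>v \<psi>) $ v"
      unfolding E_def using v ME \<psi>c ent by simp
    ultimately have "E $ v = - (\<Sum>j. cc s (j+N) * g (j+N) $ v)" by linarith
    then show ?thesis using a by simp
  qed
  define h where "h j = vnorm2 \<psi> * (x^(j+N) / fact (j+N))" for j
  have fb: "L2_set (f j) {..<n} \<le> h j" for j
  proof -
    have "L2_set (f j) {..<n} = \<bar>- cc s (j+N)\<bar> * L2_set (\<lambda>v. g (j+N) $ v) {..<n}"
      unfolding f_def by (subst L2_set_scale[symmetric]) simp
    also have "\<dots> = \<bar>cc s (j+N)\<bar> * vnorm2 (g (j+N))" using vnorm2_L2[of "g (j+N)"] gd by simp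
    also have "\<dots> \<le> \<bar>cc s (j+N)\<bar> * (lam ^ (j+N) * vnorm2 \<psi>)" by (intro mult_left_mono gb) auto
    also have "\<dots> = h j" unfolding h_def using ccb[of "j+N"] by (simp add: mult.commute mult.left_commute)
    finally show ?thesis .
  qed
  have tb: "summable (\<lambda>j. x^(j+N) / fact (j+N))" "(\<Sum>j. x^(j+N) / fact (j+N)) \<le> 2 powr (- real N + 8 * x + 1)"
    using tail_bound[OF x0, of N] by auto
  have sh: "summable h" unfolding h_def using summable_mult[OF tb(1)] .
  have "vnorm2 E = L2_set (\<lambda>v. E $ v) {..<n}" using vnorm2_L2[of E] dE by simp
  also have "\<dots> \<le> suminf h" by (rule L2_sum_bound[OF _ fsum fb sh]) auto
  also have "\<dots> = vnorm2 \<psi> * (\<Sum>j. x^(j+N) / fact (j+N))" unfolding h_def using suminf_mult[OF tb(1)] .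
  also have "\<dots> \<le> vnorm2 \<psi> * 2 powr (- real N + 8 * x + 1)"
    using tb(2) vnorm2_L2[of \<psi>] L2_set_nonneg by (intro mult_left_mono) auto
  finally show ?thesis unfolding E_def \<psi>_def x_def by (simp add: mult.commute mult.assoc)
qed



lemma lap_psd:
  assumes B: "B \<in> carrier_mat n d"
  shows "qf n (\<lambda>u v. laplacian B $$ (u,v)) x x \<ge> 0"
proof -
  have e: "laplacian B $$ (u,v) = (\<Sum>a<d. B $$ (u,a) * B $$ (v,a))" if "u < n" "v < n" for u v
    unfolding laplacian_def using B that by (simp add: scalar_prod_def lessThan_atLeast0)
  have "qf n (\<lambda>u v. laplacian B $$ (u,v)) x x = (\<Sum>u<n. \<Sum>v<n. \<Sum>a<d. (x u * B $$ (u,a)) * (B $$ (v,a) * x v))"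
    unfolding qf_def by (intro sum.cong refl) (simp add: e sum_distrib_left sum_distrib_right mult.assoc mult.left_commute)
  also have "\<dots> = (\<Sum>u<n. \<Sum>a<d. \<Sum>v<n. (x u * B $$ (u,a)) * (B $$ (v,a) * x v))"
    by (rule sum.cong[OF refl], rule sum.swap)
  also have "\<dots> = (\<Sum>a<d. \<Sum>u<n. \<Sum>v<n. (x u * B $$ (u,a)) * (B $$ (v,a) * x v))"
    by (rule sum.swap)
  also have "\<dots> = (\<Sum>a<d. (\<Sum>u<n. x u * B $$ (u,a)) * (\<Sum>v<n. B $$ (v,a) * x v))"
    by (simp add: sum_product)
  also have "\<dots> = (\<Sum>a<d. (\<Sum>u<n. x u * B $$ (u,a))^2)"
    by (simp add: power2_eq_square mult.commute)
  finally have eq: "qf n (\<lambda>u v. laplacian B $$ (u,v)) x x = (\<Sum>a<d. (\<Sum>u<n. x u * B $$ (u,a))^2)" .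
  have "(\<Sum>a<d. (\<Sum>u<n. x u * B $$ (u,a))^2) \<ge> 0" by (intro sum_nonneg) simp
  then show ?thesis using eq by simp
qed

theorem lemma3:
  fixes n d k L :: nat and s :: real
  assumes "n \<ge> 1" and "d \<ge> 1" and "k \<ge> 1" and "L \<ge> 1" and "s > 0"
  shows "\<exists>WV WQ WK WR :: nat \<Rightarrow> real mat.
     (\<forall>l<L. WV l \<in> carrier_mat (d+2*k) (d+2*k) \<and> WQ l \<in> carrier_mat (d+2*k) (d+2*k)
           \<and> WK l \<in> carrier_mat (d+2*k) (d+2*k) \<and> WR l \<in> carrier_mat (d+2*k) (d+2*k)) \<and>
     (\<forall>(ed :: nat \<Rightarrow> nat \<times> nat) (r :: nat \<Rightarrow> real) (Psi :: real mat).
        wf_graph n d ed r \<longrightarrow> connected_graph n d ed \<longrightarrow>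
        Psi \<in> carrier_mat n k \<longrightarrow>
        (\<forall>i<k. (\<Sum>v<n. Psi $$ (v,i)) = 0) \<longrightarrow>
        8 * s * lambda_max (laplacian (incidence n d ed r)) \<le> real L \<longrightarrow>
        (\<forall>i<k.
           vnorm2 (row (tf_run WV WQ WK WR L (input_Z0 n d k (incidence n d ed r) Psi)) (d + k + i)
                   - mat_exp ((- s) \<cdot>\<^sub>m laplacian (incidence n d ed r)) *\<^sub>v col Psi i)
           \<le> 2 powr (- real L + 8 * s * lambda_max (laplacian (incidence n d ed r)) + 1)
             * vnorm2 (col Psi i)))"
proof -
  have c1: "\<forall>l<L. WVf d k s l \<in> carrier_mat (d+2*k) (d+2*k) \<and> 1\<^sub>m (d+2*k) \<in> carrier_mat (d+2*k) (d+2*k)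
           \<and> WKf d k \<in> carrier_mat (d+2*k) (d+2*k) \<and> WRf d k \<in> carrier_mat (d+2*k) (d+2*k)"
    by (simp add: WVf_def WKf_def WRf_def)
  have c2: "\<forall>(ed :: nat \<Rightarrow> nat \<times> nat) (r :: nat \<Rightarrow> real) (Psi :: real mat).
        wf_graph n d ed r \<longrightarrow> connected_graph n d ed \<longrightarrow>
        Psi \<in> carrier_mat n k \<longrightarrow>
        (\<forall>i<k. (\<Sum>v<n. Psi $$ (v,i)) = 0) \<longrightarrow>
        8 * s * lambda_max (laplacian (incidence n d ed r)) \<le> real L \<longrightarrow>
        (\<forall>i<k.
           vnorm2 (row (tf_run (WVf d k s) (\<lambda>_. 1\<^sub>m (d+2*k)) (\<lambda>_. WKf d k) (\<lambda>_. WRf d k) L (input_Z0 n d k (incidence n d ed r) Psi)) (d + k + i)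
                   - mat_exp ((- s) \<cdot>\<^sub>m laplacian (incidence n d ed r)) *\<^sub>v col Psi i)
           \<le> 2 powr (- real L + 8 * s * lambda_max (laplacian (incidence n d ed r)) + 1)
             * vnorm2 (col Psi i))"
  proof (intro allI impI)
  fix ed :: "nat \<Rightarrow> nat \<times> nat" and r :: "nat \<Rightarrow> real" and Psi :: "real mat"
  assume "wf_graph n d ed r" "connected_graph n d ed" and Psi: "Psi \<in> carrier_mat n k"
    and "\<forall>i<k. (\<Sum>v<n. Psi $$ (v,i)) = 0"
    and "8 * s * lambda_max (laplacian (incidence n d ed r)) \<le> real L"
  fix i assume i: "i < k"
  define B where "B = incidence n d ed r"
  have Bc: "B \<in> carrier_mat n d" unfolding B_def incidence_def by simp
  define Lp where "Lp = laplacian B"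
  have Lc: "Lp \<in> carrier_mat n n" unfolding Lp_def by (rule lap_carrier[OF Bc])
  have BT: "transpose_mat B \<in> carrier_mat d n" using Bc by simp
  have sym: "transpose_mat Lp = Lp"
    unfolding Lp_def laplacian_def using transpose_mult[OF Bc BT] by simp
  have symE: "Lp $$ (u,v) = Lp $$ (v,u)" if "u < n" "v < n" for u v
  proof -
    have "Lp $$ (u,v) = transpose_mat Lp $$ (u,v)" using sym by simp
    also have "\<dots> = Lp $$ (v,u)" using Lc that by simp
    finally show ?thesis .
  qed
  have psd: "qf n (\<lambda>u v. Lp $$ (u,v)) x x \<ge> 0" for x unfolding Lp_def by (rule lap_psd[OF Bc])
  from op_bound[OF Lc assms(1) symE psd]
  have lam: "lambda_max Lp \<ge> 0" and op: "\<forall>x \<in> carrier_vec n. vnorm2 (Lp *\<^sub>v x) \<le> lambda_max Lp * vnorm2 x"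
    by auto
  have run: "tf_run (WVf d k s) (\<lambda>_. 1\<^sub>m (d+2*k)) (\<lambda>_. WKf d k) (\<lambda>_. WRf d k) L (input_Z0 n d k B Psi)
       = Zinv n d k B Psi s L" by (rule run_inv[OF Bc Psi assms(3)])
  have rw: "row (Zinv n d k B Psi s L) (d + k + i)
      = vec n (\<lambda>v. \<Sum>m<L. cc s m * (transpose_mat Psi * Lp ^\<^sub>m m) $$ (i,v))"
    unfolding row_def Zinv_def Lp_def using i by (intro eq_vecI) auto
  show "vnorm2 (row (tf_run (WVf d k s) (\<lambda>_. 1\<^sub>m (d+2*k)) (\<lambda>_. WKf d k) (\<lambda>_. WRf d k) L
            (input_Z0 n d k (incidence n d ed r) Psi)) (d + k + i)
          - mat_exp ((- s) \<cdot>\<^sub>m laplacian (incidence n d ed r)) *\<^sub>v col Psi i)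
        \<le> 2 powr (- real L + 8 * s * lambda_max (laplacian (incidence n d ed r)) + 1) * vnorm2 (col Psi i)"
    unfolding B_def[symmetric] Lp_def[symmetric] run rw
    using main_bound[OF Lc sym lam op Psi i, of s L] assms(5) by simp
  qed
  show ?thesis
    by (rule exI[of _ "WVf d k s"], rule exI[of _ "\<lambda>_. 1\<^sub>m (d+2*k)"], rule exI[of _ "\<lambda>_. WKf d k"],
        rule exI[of _ "\<lambda>_. WRf d k"], rule conjI[OF c1 c2])
qed


end
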